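(* Let $\pi_+,\bar\pi_+\in(0,1)\setminus\{1/2\}$, $\pi_-=1-\pi_+$, $\bar\pi_-=1-\bar\pi_+$, let $\ell:\mathbb R\times\{-1,+1\}\to[0,\infty)$ be a loss, $\ell_\pm(z)=\ell(z,\pm1)$, and let $g:\mathcal X\to\mathbb R$ satisfy $0\le\ell(g(\bm x),y)\le C_\ell$ for all $\bm x\in\mathcal X$, $y\in\{-1,+1\}$. For any finite samples $\{(\bm x_{\mathrm S,i},\bm x'_{\mathrm S,i})\}_{i=1}^{n_{\mathrm S}}$ and $\{(\bm x_{\mathrm D,i},\bm x'_{\mathrm D,i})\}_{i=1}^{n_{\mathrm D}}$ in $\mathcal X\times\mathcal X$, with $\widehat R_{\mathrm{S\text{-}PC}},\widehat R_{\mathrm{D\text{-}PC}},\widehat R^{\bar\pi}_{\mathrm{S\text{-}PC}},\widehat R^{\bar\pi}_{\mathrm{D\text{-}PC}}$ as in the context, we have $$|\widehat R^{\bar\pi}_{\mathrm{S\text{-}PC}}(g)-\widehat R_{\mathrm{S\text{-}PC}}(g)|\le\frac{|\bar\pi_+-\pi_+|C_\ell}{|\bar\pi_+-\bar\pi_-||\pi_+-\pi_-|}\Big\{|2\bar\pi_+\pi_+(\bar\pi_++\pi_+)-\bar\pi_+^2-\bar\pi_+\pi_+-\pi_+^2|+|\bar\pi_+\pi_+(1-\bar\pi_--\pi_-)+\bar\pi_-\pi_-(\bar\pi_++\pi_+)|+|\bar\pi_-\pi_-(1-\bar\pi_+-\pi_+)+\bar\pi_+\pi_+(\bar\pi_-+\pi_-)|+|2\bar\pi_-\pi_-(\bar\pi_-+\pi_-)-\bar\pi_-^2-\bar\pi_-\pi_--\pi_-^2|\Big\},$$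 $$|\widehat R^{\bar\pi}_{\mathrm{D\text{-}PC}}(g)-\widehat R_{\mathrm{D\text{-}PC}}(g)|\le\frac{C_\ell|\bar\pi_+-\pi_+|}{|\bar\pi_+-\bar\pi_-||\pi_+-\pi_-|}\Big\{|(\bar\pi_++\pi_+)(1-\bar\pi_+\pi_+-\bar\pi_-\pi_-)-\bar\pi_+\pi_+|+|\bar\pi_+^2+\pi_+^2-2\bar\pi_+\pi_+(\bar\pi_++\pi_+)-\bar\pi_-\pi_-|+|\bar\pi_-^2+\pi_-^2-2\bar\pi_-\pi_-(\bar\pi_-+\pi_-)-\bar\pi_+\pi_+|+|(\bar\pi_-+\pi_-)(1-\bar\pi_+\pi_+-\bar\pi_-\pi_-)-\bar\pi_-\pi_-|\Big\}.$$
   Context: For $q\in(0,1)\setminus\{1/2\}$, $q_+=q$, $q_-=1-q$, define $\widehat R^{(q)}_{\mathrm{S}}(g)=\frac{1}{(q_+-q_-)n_{\mathrm S}}\sum_{i=1}^{n_{\mathrm S}}[q_+^3\ell_+(g(\bm x_{\mathrm S,i}))-q_+^2q_-\ell_-(g(\bm x_{\mathrm S,i}))+q_+q_-^2\ell_+(g(\bm x'_{\mathrm S,i}))-q_-^3\ell_-(g(\bm x'_{\mathrm S,i}))]$ and $\widehat R^{(q)}_{\mathrm{D}}(g)=\frac{1}{(q_+-q_-)n_{\mathrm D}}\sum_{i=1}^{n_{\mathrm D}}[q_-(q_+^2-q_-)\ell_+(g(\bm x_{\mathrm D,i}))+q_+(q_--q_+^2)\ell_-(g(\bm x_{\mathrm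 D,i}))+q_-(q_-^2-q_+)\ell_+(g(\bm x'_{\mathrm D,i}))+q_+(q_+-q_-^2)\ell_-(g(\bm x'_{\mathrm D,i}))]$. Then $\widehat R_{\mathrm{S\text{-}PC}}=\widehat R^{(\pi_+)}_{\mathrm S}$, $\widehat R_{\mathrm{D\text{-}PC}}=\widehat R^{(\pi_+)}_{\mathrm D}$ (empirical SD-Pcomp risks with the true class prior) and $\widehat R^{\bar\pi}_{\mathrm{S\text{-}PC}}=\widehat R^{(\bar\pi_+)}_{\mathrm S}$, $\widehat R^{\bar\pi}_{\mathrm{D\text{-}PC}}=\widehat R^{(\bar\pi_+)}_{\mathrm D}$ (the same with the class prior replaced by the estimate $\bar\pi_+$). *)

theory Defs
  imports Complex_Main
begin

text \<open>Samples are indexed by \<open>i < n\<close> (i.e. i = 1..n shifted to 0..n-1).\<close>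

definition lplus :: "(real \<Rightarrow> int \<Rightarrow> real) \<Rightarrow> real \<Rightarrow> real" where
  "lplus l z = l z 1"

definition lminus :: "(real \<Rightarrow> int \<Rightarrow> real) \<Rightarrow> real \<Rightarrow> real" where
  "lminus l z = l z (-1)"

definition RS_hat :: "real \<Rightarrow> (real \<Rightarrow> int \<Rightarrow> real) \<Rightarrow> ('x \<Rightarrow> real) \<Rightarrow> nat
    \<Rightarrow> (nat \<Rightarrow> 'x) \<Rightarrow> (nat \<Rightarrow> 'x) \<Rightarrow> real" where
  "RS_hat q l g n xs xs' =
     (let qp = q; qm = 1 - q in
      1 / ((qp - qm) * real n) *
      (\<Sum>i<n. qp^3 * lplus l (g (xs i)) - qp^2 * qm * lminus l (g (xs i))
             + qp * qm^2 * lplus l (g (xs' i)) - qm^3 * lminus l (g (xs' i))))"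

definition RD_hat :: "real \<Rightarrow> (real \<Rightarrow> int \<Rightarrow> real) \<Rightarrow> ('x \<Rightarrow> real) \<Rightarrow> nat
    \<Rightarrow> (nat \<Rightarrow> 'x) \<Rightarrow> (nat \<Rightarrow> 'x) \<Rightarrow> real" where
  "RD_hat q l g n xd xd' =
     (let qp = q; qm = 1 - q in
      1 / ((qp - qm) * real n) *
      (\<Sum>i<n. qm * (qp^2 - qm) * lplus l (g (xd i)) + qp * (qm - qp^2) * lminus l (g (xd i))
             + qm * (qm^2 - qp) * lplus l (g (xd' i)) + qp * (qp - qm^2) * lminus l (g (xd' i))))"

end

theory Submission
  imports Defs
begin

lemma gen_bound:
  fixes L1 L2 L3 L4 :: "nat \<Rightarrow> real"
  assumes C: "0 \<le> C"
    and b: "\<And>i. 0 \<le> L1 i \<and> L1 i \<le> C" "\<And>i. 0 \<le> L2 i \<and> L2 i \<le> C"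
      "\<And>i. 0 \<le> L3 i \<and> L3 i \<le> C" "\<And>i. 0 \<le> L4 i \<and> L4 i \<le> C"
  shows "\<bar>1 / real n * (\<Sum>i<n. a1 * L1 i + a2 * L2 i + a3 * L3 i + a4 * L4 i)\<bar>
     \<le> C * (\<bar>a1\<bar> + \<bar>a2\<bar> + \<bar>a3\<bar> + \<bar>a4\<bar>)"
proof (cases "n = 0")
  case True then show ?thesis using C by simp
next
  case False
  have t: "\<bar>a * x\<bar> \<le> \<bar>a\<bar> * C" if "0 \<le> x \<and> x \<le> C" for x a :: real
    using that by (simp add: abs_mult mult_left_mono)
  have "\<bar>\<Sum>i<n. a1 * L1 i + a2 * L2 i + a3 * L3 i + a4 * L4 i\<bar>
      \<le> (\<Sum>i<n. \<bar>a1 * L1 i + a2 * L2 i + a3 * L3 i + a4 * L4 i\<bar>)"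
    by (rule sum_abs)
  also have "\<dots> \<le> (\<Sum>i<n. C * (\<bar>a1\<bar> + \<bar>a2\<bar> + \<bar>a3\<bar> + \<bar>a4\<bar>))"
  proof (rule sum_mono)
    fix i
    have "\<bar>a1 * L1 i + a2 * L2 i + a3 * L3 i + a4 * L4 i\<bar>
       \<le> \<bar>a1 * L1 i\<bar> + \<bar>a2 * L2 i\<bar> + \<bar>a3 * L3 i\<bar> + \<bar>a4 * L4 i\<bar>" by linarith
    also have "\<dots> \<le> \<bar>a1\<bar> * C + \<bar>a2\<bar> * C + \<bar>a3\<bar> * C + \<bar>a4\<bar> * C"
      using t[of "L1 i" a1, OF b(1)] t[of "L2 i" a2, OF b(2)] t[of "L3 i" a3, OF b(3)] t[of "L4 i" a4, OF b(4)] by linarith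
    finally show "\<bar>a1 * L1 i + a2 * L2 i + a3 * L3 i + a4 * L4 i\<bar>
       \<le> C * (\<bar>a1\<bar> + \<bar>a2\<bar> + \<bar>a3\<bar> + \<bar>a4\<bar>)" by (simp add: algebra_simps)
  qed
  also have "\<dots> = real n * (C * (\<bar>a1\<bar> + \<bar>a2\<bar> + \<bar>a3\<bar> + \<bar>a4\<bar>))" by simp
  finally have "\<bar>\<Sum>i<n. a1 * L1 i + a2 * L2 i + a3 * L3 i + a4 * L4 i\<bar>
      \<le> real n * (C * (\<bar>a1\<bar> + \<bar>a2\<bar> + \<bar>a3\<bar> + \<bar>a4\<bar>))" .
  then show ?thesis using False by (simp add: abs_mult field_simps)
qed

lemma diff_form:
  fixes L1 L2 L3 L4 :: "nat \<Rightarrow> real"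
  shows "1 / real n * (\<Sum>i<n. a1 * L1 i + a2 * L2 i + a3 * L3 i + a4 * L4 i)
   - 1 / real n * (\<Sum>i<n. b1 * L1 i + b2 * L2 i + b3 * L3 i + b4 * L4 i)
   = 1 / real n * (\<Sum>i<n. (a1 - b1) * L1 i + (a2 - b2) * L2 i + (a3 - b3) * L3 i + (a4 - b4) * L4 i)"
  unfolding right_diff_distrib[symmetric] sum_subtractf[symmetric]
  by (rule arg_cong[where f="\<lambda>x. 1 / real n * x"], rule sum.cong) (auto simp: algebra_simps)

definition s1 :: "real \<Rightarrow> real" where "s1 q = q^3 / (q - (1-q))"
definition s2 :: "real \<Rightarrow> real" where "s2 q = - (q^2 * (1-q)) / (q - (1-q))"
definition s3 :: "real \<Rightarrow> real" where "s3 q = q * (1-q)^2 / (q - (1-q))"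
definition s4 :: "real \<Rightarrow> real" where "s4 q = - ((1-q)^3) / (q - (1-q))"
definition d1 :: "real \<Rightarrow> real" where "d1 q = (1-q) * (q^2 - (1-q)) / (q - (1-q))"
definition d2 :: "real \<Rightarrow> real" where "d2 q = q * ((1-q) - q^2) / (q - (1-q))"
definition d3 :: "real \<Rightarrow> real" where "d3 q = (1-q) * ((1-q)^2 - q) / (q - (1-q))"
definition d4 :: "real \<Rightarrow> real" where "d4 q = q * (q - (1-q)^2) / (q - (1-q))"

lemma RS_form:
  assumes "q \<noteq> 1/2"
  shows "RS_hat q l g n xs xs' = 1 / real n * (\<Sum>i<n.
     s1 q * lplus l (g (xs i)) + s2 q * lminus l (g (xs i))
   + s3 q * lplus l (g (xs' i)) + s4 q * lminus l (g (xs' i)))"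
proof -
  have q: "q - (1 - q) \<noteq> 0" using assms by simp
  show ?thesis unfolding RS_hat_def Let_def
    by (simp add: sum_distrib_left s1_def s2_def s3_def s4_def q diff_divide_distrib add_divide_distrib mult.commute mult.left_commute)
qed

lemma RD_form:
  assumes "q \<noteq> 1/2"
  shows "RD_hat q l g n xs xs' = 1 / real n * (\<Sum>i<n.
     d1 q * lplus l (g (xs i)) + d2 q * lminus l (g (xs i))
   + d3 q * lplus l (g (xs' i)) + d4 q * lminus l (g (xs' i)))"
proof -
  have q: "q - (1 - q) \<noteq> 0" using assms by simp
  show ?thesis unfolding RD_hat_def Let_def
    by (simp add: sum_distrib_left d1_def d2_def d3_def d4_def q diff_divide_distrib add_divide_distrib mult.commute mult.left_commute)
qed


theorem lemmaA8:
  fixes pp pb C :: real and l :: "real \<Rightarrow> int \<Rightarrow> real" and g :: "'x \<Rightarrow> real"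
    and nS nD :: nat and xS xS' xD xD' :: "nat \<Rightarrow> 'x"
  assumes pp: "0 < pp" "pp < 1" "pp \<noteq> 1/2"
    and pb: "0 < pb" "pb < 1" "pb \<noteq> 1/2"
    and loss_nonneg: "\<And>z y. y \<in> {-1, 1} \<Longrightarrow> 0 \<le> l z y"
    and bound: "\<And>x y. y \<in> {-1, 1} \<Longrightarrow> 0 \<le> l (g x) y \<and> l (g x) y \<le> C"
  shows "let pm = 1 - pp; bm = 1 - pb in
    \<bar>RS_hat pb l g nS xS xS' - RS_hat pp l g nS xS xS'\<bar>
      \<le> \<bar>pb - pp\<bar> * C / (\<bar>pb - bm\<bar> * \<bar>pp - pm\<bar>) *
         (\<bar>2 * pb * pp * (pb + pp) - pb^2 - pb * pp - pp^2\<bar>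
          + \<bar>pb * pp * (1 - bm - pm) + bm * pm * (pb + pp)\<bar>
          + \<bar>bm * pm * (1 - pb - pp) + pb * pp * (bm + pm)\<bar>
          + \<bar>2 * bm * pm * (bm + pm) - bm^2 - bm * pm - pm^2\<bar>)
    \<and>
    \<bar>RD_hat pb l g nD xD xD' - RD_hat pp l g nD xD xD'\<bar>
      \<le> C * \<bar>pb - pp\<bar> / (\<bar>pb - bm\<bar> * \<bar>pp - pm\<bar>) *
         (\<bar>(pb + pp) * (1 - pb * pp - bm * pm) - pb * pp\<bar>
          + \<bar>pb^2 + pp^2 - 2 * pb * pp * (pb + pp) - bm * pm\<bar>
          + \<bar>bm^2 + pm^2 - 2 * bm * pm * (bm + pm) - pb * pp\<bar>
          + \<bar>(bm + pm) * (1 - pb * pp - bm * pm) - bm * pm\<bar>)"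
proof -
  define pm where "pm = 1 - pp"
  define bm where "bm = 1 - pb"
  have bp: "\<And>x. 0 \<le> lplus l (g x) \<and> lplus l (g x) \<le> C"
    using bound unfolding lplus_def by auto
  have bmi: "\<And>x. 0 \<le> lminus l (g x) \<and> lminus l (g x) \<le> C"
    using bound unfolding lminus_def by auto
  have C: "0 \<le> C" using bp by (meson order_trans)
  have nb: "pb - (1 - pb) \<noteq> 0" and np: "pp - (1 - pp) \<noteq> 0" using pp pb by auto
  define K where "K = \<bar>pb - pp\<bar> / (\<bar>pb - bm\<bar> * \<bar>pp - pm\<bar>)"
  have key: "\<bar>X b - X p\<bar> = K * \<bar>T\<bar>"
    if "X b - X p = s * ((pb - pp) * T / ((pb - bm) * (pp - pm)))" "s = 1 \<or> s = -1"
    for X :: "real \<Rightarrow> real" and b p T s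
    using that unfolding K_def by (auto simp: abs_mult abs_divide)
  have d: "\<bar>X pb - X pp\<bar> = K * \<bar>T\<bar>"
    if "\<And>q. X q = N q / (q - (1 - q))"
       "N pb * (pp - (1 - pp)) - N pp * (pb - (1 - pb)) = s * ((pb - pp) * T)" "s = 1 \<or> s = -1"
    for X N :: "real \<Rightarrow> real" and T s
  proof (rule key[OF _ that(3)])
    have "X pb - X pp = (N pb * (pp - (1 - pp)) - N pp * (pb - (1 - pb))) / ((pb - (1 - pb)) * (pp - (1 - pp)))"
      unfolding that(1) using nb np by (simp add: field_simps)
    then show "X pb - X pp = s * ((pb - pp) * T / ((pb - bm) * (pp - pm)))"
      unfolding that(2) by (simp add: bm_def pm_def)
  qed
  have S1: "\<bar>s1 pb - s1 pp\<bar> = K * \<bar>2 * pb * pp * (pb + pp) - pb^2 - pb * pp - pp^2\<bar>"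
    by (rule d[where s=1, OF s1_def]) (simp_all add: bm_def pm_def algebra_simps power2_eq_square power3_eq_cube)
  have S2: "\<bar>s2 pb - s2 pp\<bar> = K * \<bar>pb * pp * (1 - bm - pm) + bm * pm * (pb + pp)\<bar>"
    by (rule d[where s=1, OF s2_def]) (simp_all add: bm_def pm_def algebra_simps power2_eq_square power3_eq_cube)
  have S3: "\<bar>s3 pb - s3 pp\<bar> = K * \<bar>bm * pm * (1 - pb - pp) + pb * pp * (bm + pm)\<bar>"
    by (rule d[where s="-1", OF s3_def]) (simp_all add: bm_def pm_def algebra_simps power2_eq_square power3_eq_cube)
  have S4: "\<bar>s4 pb - s4 pp\<bar> = K * \<bar>2 * bm * pm * (bm + pm) - bm^2 - bm * pm - pm^2\<bar>"
    by (rule d[where s="-1", OF s4_def]) (simp_all add: bm_def pm_def algebra_simps power2_eq_square power3_eq_cube)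
  have D1: "\<bar>d1 pb - d1 pp\<bar> = K * \<bar>(pb + pp) * (1 - pb * pp - bm * pm) - pb * pp\<bar>"
    by (rule d[where s=1, OF d1_def]) (simp_all add: bm_def pm_def algebra_simps power2_eq_square power3_eq_cube)
  have D2: "\<bar>d2 pb - d2 pp\<bar> = K * \<bar>pb^2 + pp^2 - 2 * pb * pp * (pb + pp) - bm * pm\<bar>"
    by (rule d[where s=1, OF d2_def]) (simp_all add: bm_def pm_def algebra_simps power2_eq_square power3_eq_cube)
  have D3: "\<bar>d3 pb - d3 pp\<bar> = K * \<bar>bm^2 + pm^2 - 2 * bm * pm * (bm + pm) - pb * pp\<bar>"
    by (rule d[where s="-1", OF d3_def]) (simp_all add: bm_def pm_def algebra_simps power2_eq_square power3_eq_cube)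
  have D4: "\<bar>d4 pb - d4 pp\<bar> = K * \<bar>(bm + pm) * (1 - pb * pp - bm * pm) - bm * pm\<bar>"
    by (rule d[where s="-1", OF d4_def]) (simp_all add: bm_def pm_def algebra_simps power2_eq_square power3_eq_cube)
  have A: "\<bar>RS_hat pb l g nS xS xS' - RS_hat pp l g nS xS xS'\<bar>
      \<le> \<bar>pb - pp\<bar> * C / (\<bar>pb - bm\<bar> * \<bar>pp - pm\<bar>) *
         (\<bar>2 * pb * pp * (pb + pp) - pb^2 - pb * pp - pp^2\<bar>
          + \<bar>pb * pp * (1 - bm - pm) + bm * pm * (pb + pp)\<bar>
          + \<bar>bm * pm * (1 - pb - pp) + pb * pp * (bm + pm)\<bar>
          + \<bar>2 * bm * pm * (bm + pm) - bm^2 - bm * pm - pm^2\<bar>)"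
  proof -
    have "\<bar>RS_hat pb l g nS xS xS' - RS_hat pp l g nS xS xS'\<bar> \<le> C * (
       \<bar>s1 pb - s1 pp\<bar> + \<bar>s2 pb - s2 pp\<bar> + \<bar>s3 pb - s3 pp\<bar> + \<bar>s4 pb - s4 pp\<bar>)"
      unfolding RS_form[OF pb(3)] RS_form[OF pp(3)] diff_form
      by (rule gen_bound[OF C bp bmi bp bmi])
    then show "\<bar>RS_hat pb l g nS xS xS' - RS_hat pp l g nS xS xS'\<bar>
      \<le> \<bar>pb - pp\<bar> * C / (\<bar>pb - bm\<bar> * \<bar>pp - pm\<bar>) *
         (\<bar>2 * pb * pp * (pb + pp) - pb^2 - pb * pp - pp^2\<bar>
          + \<bar>pb * pp * (1 - bm - pm) + bm * pm * (pb + pp)\<bar>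
          + \<bar>bm * pm * (1 - pb - pp) + pb * pp * (bm + pm)\<bar>
          + \<bar>2 * bm * pm * (bm + pm) - bm^2 - bm * pm - pm^2\<bar>)"
      unfolding S1 S2 S3 S4 K_def by (simp add: algebra_simps)
  qed
  have B: "\<bar>RD_hat pb l g nD xD xD' - RD_hat pp l g nD xD xD'\<bar>
      \<le> C * \<bar>pb - pp\<bar> / (\<bar>pb - bm\<bar> * \<bar>pp - pm\<bar>) *
         (\<bar>(pb + pp) * (1 - pb * pp - bm * pm) - pb * pp\<bar>
          + \<bar>pb^2 + pp^2 - 2 * pb * pp * (pb + pp) - bm * pm\<bar>
          + \<bar>bm^2 + pm^2 - 2 * bm * pm * (bm + pm) - pb * pp\<bar>
          + \<bar>(bm + pm) * (1 - pb * pp - bm * pm) - bm * pm\<bar>)"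
  proof -
    have "\<bar>RD_hat pb l g nD xD xD' - RD_hat pp l g nD xD xD'\<bar> \<le> C * (
       \<bar>d1 pb - d1 pp\<bar> + \<bar>d2 pb - d2 pp\<bar> + \<bar>d3 pb - d3 pp\<bar> + \<bar>d4 pb - d4 pp\<bar>)"
      unfolding RD_form[OF pb(3)] RD_form[OF pp(3)] diff_form
      by (rule gen_bound[OF C bp bmi bp bmi])
    then show "\<bar>RD_hat pb l g nD xD xD' - RD_hat pp l g nD xD xD'\<bar>
      \<le> C * \<bar>pb - pp\<bar> / (\<bar>pb - bm\<bar> * \<bar>pp - pm\<bar>) *
         (\<bar>(pb + pp) * (1 - pb * pp - bm * pm) - pb * pp\<bar>
          + \<bar>pb^2 + pp^2 - 2 * pb * pp * (pb + pp) - bm * pm\<bar>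
          + \<bar>bm^2 + pm^2 - 2 * bm * pm * (bm + pm) - pb * pp\<bar>
          + \<bar>(bm + pm) * (1 - pb * pp - bm * pm) - bm * pm\<bar>)"
      unfolding D1 D2 D3 D4 K_def by (simp add: algebra_simps)
  qed
  show ?thesis using A B unfolding Let_def pm_def bm_def by (rule conjI)
qed

end
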